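(* Let $a_1\ne0$, $0<\varepsilon<1$, $T=1+\varepsilon$, $(y,x_0)\in M^2$, and $\widetilde{x}(t)=y+a_1\int_0^tx_0(\tau-1)\,d\tau$. Then the minimum energy problem $\|u\|_{L^2(0,T)}\to\min$, $u\in\mathcal{U}_T(y,x_0)$, has a unique solution $\widehat u$. It is given by $$\widehat u(t)=\begin{cases}\widehat u_0(t), & t\in[0,\varepsilon),\\ -a_1x_0(t-1), & t\in[\varepsilon,1),\\ -a_1\Big(\widetilde{x}(t-1)+\int_0^{t-1}\widehat u_0(\tau)\,d\tau\Big), & t\in[1,1+\varepsilon),\end{cases}$$ where $$\widehat u_0(t)=c\cosh(a_1t)+a_1^2\int_0^t\cosh(a_1(t-\tau))\,\widetilde{x}(\tau)\,d\tau,\qquad c=-\frac{a_1}{\sinh(a_1\varepsilon)}\Big(\widetilde{x}(\varepsilon)+a_1\int_0^\varepsilon\sinh(a_1(\varepsilon-\tau))\,\widetilde{x}(\tau)\,d\tau\Big).$$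
   Context: Consider the scalar retarded control equation $\dot x(t)=a_1x(t-1)+u(t)$, $t\ge0$, with control $u\in L^2_{loc}(0,\infty)$ and initial data $x(0)=y$, $x(t)=x_0(t)$ for $t\in[-1,0)$, where $(y,x_0)\in M^2=\mathbb{R}\times L^2(-1,0)$. For every such initial state and control there is a unique continuous solution $x(t)=x(t;y,x_0,u)$ on $[0,\infty)$. For $T>1$, the set of admissible controls $\mathcal{U}_T(y,x_0)$ is the set of $u\in L^2(0,T)$ such that $x(t;y,x_0,u)=0$ for all $t\in[T-1,T]$. *)

theory Defs
  imports "HOL-Analysis.Analysis"
begin

definition L2_on :: "real set \<Rightarrow> (real \<Rightarrow> real) \<Rightarrow> bool" where
  "L2_on S f \<longleftrightarrow> set_borel_measurable lborel S f \<and> set_integrable lborel S (\<lambda>t. (f t)^2)"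

definition L2_norm_on :: "real set \<Rightarrow> (real \<Rightarrow> real) \<Rightarrow> real" where
  "L2_norm_on S f = sqrt (LINT t:S|lborel. (f t)^2)"

text \<open>x is a (continuous) solution on [0,T] of x'(t) = a1 x(t-1) + u(t),
  x(0) = y, x(t) = x0(t) on [-1,0), written in integrated form.\<close>
definition dde_sol :: "real \<Rightarrow> real \<Rightarrow> (real \<Rightarrow> real) \<Rightarrow> (real \<Rightarrow> real) \<Rightarrow> real \<Rightarrow> (real \<Rightarrow> real) \<Rightarrow> bool" where
  "dde_sol a1 y x0 u T x \<longleftrightarrow> continuous_on {0..T} x \<and>
     (\<forall>t\<in>{0..T}. x t = y + (LINT s:{0..t}|lborel. a1 * (if s < 1 then x0 (s - 1) else x (s - 1)) + u s))"

definition admissible :: "real \<Rightarrow> real \<Rightarrow> real \<Rightarrow> (real \<Rightarrow> real) \<Rightarrow> (real \<Rightarrow> real) \<Rightarrow> bool" where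
  "admissible a1 T y x0 u \<longleftrightarrow> L2_on {0..T} u \<and>
     (\<exists>x. dde_sol a1 y x0 u T x \<and> (\<forall>t\<in>{T - 1..T}. x t = 0))"

end

theory Submission
  imports Defs
begin




lemma ae_zero_of_intervals:
  fixes g :: "real \<Rightarrow> real"
  assumes gi: "set_integrable lborel {a..b} g"
    and z: "\<And>t. t \<in> {a..b} \<Longrightarrow> (LINT s:{a..t}|lborel. g s) = 0"
  shows "AE s in lborel. s \<in> {a..b} \<longrightarrow> g s = 0"
proof -
  define f where "f = (\<lambda>s. indicator {a..b} s * g s)"
  have fi: "integrable lborel f" using gi unfolding f_def set_integrable_def by simp
  have fUNIV: "f integrable_on UNIV"
    using has_integral_integral_lborel[OF fi] by (auto simp: integrable_on_def)
  have fcb: "\<And>c d. f integrable_on cbox c d"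
    using integrable_on_subcbox[OF fUNIV] by blast
  obtain N where N: "negligible N" and
    Nd: "\<And>x e. \<lbrakk>x \<notin> N; 0 < e\<rbrakk> \<Longrightarrow>
               \<exists>d>0. \<forall>h. 0 < h \<and> h < d \<longrightarrow>
                         norm(integral (cbox x (x + h *\<^sub>R One)) f /\<^sub>R h ^ DIM(real) - f x) < e"
    using integrable_ccontinuous_explicit[of f] fcb by metis
  have If: "integral {a..t} f = 0" if "t \<in> {a..b}" for t
  proof -
    have "set_integrable lborel {a..t} g"
      by (rule set_integrable_subset[OF gi]) (use that in auto)
    then have "(LINT s:{a..t}|lborel. g s) = integral {a..t} g"
      by (rule set_borel_integral_eq_integral)
    moreover have "integral {a..t} f = integral {a..t} g"
      by (rule integral_cong) (use that in \<open>auto simp: f_def\<close>)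
    ultimately show ?thesis using z[OF that] by simp
  qed
  have f0: "f x = 0" if x: "x \<in> {a<..<b}" "x \<notin> N" for x
  proof (rule ccontr)
    assume ne: "f x \<noteq> 0"
    then have "0 < norm (f x)" by simp
    from Nd[OF x(2) this] obtain d where d: "d > 0" and
      dd: "\<And>h. 0 < h \<and> h < d \<Longrightarrow> norm(integral (cbox x (x + h *\<^sub>R One)) f /\<^sub>R h ^ DIM(real) - f x) < norm (f x)"
      by blast
    define h where "h = min d (b - x) / 2"
    have h: "0 < h" "h < d" "x + h \<le> b" using d x unfolding h_def by (auto simp: min_def field_simps)
    have fi2: "f integrable_on {a..x + h}" using fcb[of a "x+h"] unfolding cbox_interval .
    have "integral {a..x} f + integral {x..x+h} f = integral {a..x+h} f"
      using Henstock_Kurzweil_Integration.integral_combine[of a x "x+h" f] x h fi2 by simp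
    moreover have "integral {a..x} f = 0" by (rule If) (use x in auto)
    moreover have "integral {a..x+h} f = 0" by (rule If) (use x h in auto)
    ultimately have i0: "integral {x..x+h} f = 0" by simp
    have "cbox x (x + h *\<^sub>R One) = {x..x+h}" by (simp add: cbox_interval)
    with i0 have "integral (cbox x (x + h *\<^sub>R One)) f /\<^sub>R h ^ DIM(real) - f x = - f x"
      by simp
    then have "norm (integral (cbox x (x + h *\<^sub>R One)) f /\<^sub>R h ^ DIM(real) - f x) = norm (f x)"
      by (simp only: norm_minus_cancel)
    with dd[of h] h show False by linarith
  qed
  have "N \<union> {a, b} \<in> null_sets lebesgue"
  proof -
    have "negligible (N \<union> {a, b})" using N by (simp add: negligible_insert)
    then show ?thesis by (simp add: negligible_iff_null_sets)
  qed
  then have "AE s in lebesgue. s \<notin> N \<union> {a,b}"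
    by (rule AE_not_in)
  then have "AE s in lebesgue. s \<in> {a..b} \<longrightarrow> g s = 0"
  proof (rule AE_mp, intro AE_I2 impI)
    fix s assume s: "s \<notin> N \<union> {a, b}" "s \<in> {a..b}"
    then have "s \<in> {a<..<b}" by auto
    with f0[of s] s show "g s = 0" by (auto simp: f_def)
  qed
  then show ?thesis by (simp add: AE_completion_iff)
qed




lemma abs_le_1_sq: "\<bar>v::real\<bar> \<le> 1 + v^2"
proof -
  have "0 \<le> (\<bar>v\<bar> - 1)^2" by simp
  moreover have "\<bar>v\<bar>^2 = v^2" by simp
  ultimately show ?thesis by (simp add: power2_eq_square algebra_simps)
qed
lemma abs_mult_le_sq: "\<bar>(u::real) * v\<bar> \<le> u^2 + v^2"
proof -
  have "0 \<le> (\<bar>u\<bar> - \<bar>v\<bar>)^2" by simp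
  then have "2 * (\<bar>u\<bar> * \<bar>v\<bar>) \<le> \<bar>u\<bar>^2 + \<bar>v\<bar>^2" by (simp add: power2_eq_square algebra_simps)
  moreover have "0 \<le> \<bar>u\<bar> * \<bar>v\<bar>" by simp
  moreover have "\<bar>u\<bar>^2 = u^2" "\<bar>v\<bar>^2 = v^2" "\<bar>u * v\<bar> = \<bar>u\<bar> * \<bar>v\<bar>" by (simp_all add: abs_mult)
  ultimately show ?thesis by linarith
qed

lemma set_integrable_eq_on:
  assumes "set_integrable M A g" "\<And>x. x \<in> A \<Longrightarrow> f x = g x"
  shows "set_integrable M A f"
proof -
  have "(\<lambda>x. indicator A x *\<^sub>R f x) = (\<lambda>x. indicator A x *\<^sub>R g x)"
    using assms(2) by (auto simp: fun_eq_iff split: split_indicator)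
  then show ?thesis using assms(1) unfolding set_integrable_def by simp
qed

lemma set_integral_eq_on:
  assumes "\<And>x. x \<in> A \<Longrightarrow> f x = g x"
  shows "(LINT x:A|M. f x) = (LINT x:A|M. g x)"
proof -
  have "(\<lambda>x. indicator A x *\<^sub>R f x) = (\<lambda>x. indicator A x *\<^sub>R g x)"
    using assms by (auto simp: fun_eq_iff split: split_indicator)
  then show ?thesis unfolding set_lebesgue_integral_def by simp
qed

lemma shift_set:
  fixes f :: "real \<Rightarrow> real"
  assumes "\<And>s. s \<in> A \<longleftrightarrow> s - d \<in> B"
  shows "(LINT s:A|lborel. f (s - d)) = (LINT r:B|lborel. f r)"
    and "set_integrable lborel A (\<lambda>s. f (s - d)) \<longleftrightarrow> set_integrable lborel B f"
proof -
  have eq: "(\<lambda>x. indicator B (- d + 1 * x) *\<^sub>R f (- d + 1 * x)) = (\<lambda>x. indicator A x *\<^sub>R f (x - d))"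
    using assms by (auto simp: fun_eq_iff split: split_indicator)
  show "(LINT s:A|lborel. f (s - d)) = (LINT r:B|lborel. f r)"
    unfolding set_lebesgue_integral_def
    using lborel_integral_real_affine[of 1 "\<lambda>x. indicator B x *\<^sub>R f x" "-d"] eq by simp
  show "set_integrable lborel A (\<lambda>s. f (s - d)) \<longleftrightarrow> set_integrable lborel B f"
    unfolding set_integrable_def
    using lborel_integrable_real_affine_iff[of 1 "\<lambda>x. indicator B x *\<^sub>R f x" "-d"] eq by simp
qed

lemma L2_L1:
  fixes f :: "real \<Rightarrow> real"
  assumes m: "set_borel_measurable lborel S f" and sq: "set_integrable lborel S (\<lambda>t. (f t)^2)"
    and fin: "emeasure lborel S < \<infinity>" and S: "S \<in> sets borel"
  shows "set_integrable lborel S f"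
  unfolding set_integrable_def
proof (rule Bochner_Integration.integrable_bound)
  have "integrable lborel (\<lambda>x. indicator S x * (1::real))"
    using fin S by (simp add: integrable_indicator_iff)
  moreover have "integrable lborel (\<lambda>x. indicator S x * (f x)^2)"
    using sq unfolding set_integrable_def by simp
  ultimately show "integrable lborel (\<lambda>x. indicator S x * (1 + (f x)^2))"
    unfolding distrib_left by (rule Bochner_Integration.integrable_add)
  show "(\<lambda>x. indicator S x *\<^sub>R f x) \<in> borel_measurable lborel"
    using m unfolding set_borel_measurable_def .
  have "\<And>v::real. \<bar>v\<bar> \<le> 1 + v^2" by (rule abs_le_1_sq)
  then show "AE x in lborel. norm (indicator S x *\<^sub>R f x) \<le> norm (indicator S x * (1 + (f x)^2))"
    by (auto split: split_indicator)
qed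

lemma L2_mult:
  fixes f g :: "real \<Rightarrow> real"
  assumes mf: "set_borel_measurable lborel S f" and mg: "set_borel_measurable lborel S g"
    and sf: "set_integrable lborel S (\<lambda>t. (f t)^2)" and sg: "set_integrable lborel S (\<lambda>t. (g t)^2)"
  shows "set_integrable lborel S (\<lambda>t. f t * g t)"
  unfolding set_integrable_def
proof (rule Bochner_Integration.integrable_bound)
  show "integrable lborel (\<lambda>x. indicator S x * (f x)^2 + indicator S x * (g x)^2)"
    using sf sg unfolding set_integrable_def by (intro Bochner_Integration.integrable_add) simp_all
  have "(\<lambda>x. (indicator S x *\<^sub>R f x) * (indicator S x *\<^sub>R g x)) \<in> borel_measurable lborel"
    using mf mg unfolding set_borel_measurable_def by simp
  moreover have "(\<lambda>x. (indicator S x *\<^sub>R f x) * (indicator S x *\<^sub>R g x)) = (\<lambda>x. indicator S x *\<^sub>R (f x * g x))"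
    by (auto simp: fun_eq_iff split: split_indicator)
  ultimately show "(\<lambda>x. indicator S x *\<^sub>R (f x * g x)) \<in> borel_measurable lborel" by simp
  have "\<And>u v::real. \<bar>u * v\<bar> \<le> u^2 + v^2" by (rule abs_mult_le_sq)
  then show "AE x in lborel. norm (indicator S x *\<^sub>R (f x * g x)) \<le> norm (indicator S x * (f x)^2 + indicator S x * (g x)^2)"
    by (auto split: split_indicator)
qed

lemma set_integral_singleton0: "(LINT x:{b}|lborel. (f x :: real)) = 0"
  unfolding set_lebesgue_integral_def
  by (rule integral_eq_zero_AE) (rule eventually_mono[OF AE_lborel_singleton[of b]], simp)

lemma set_integral_split:
  fixes f :: "real \<Rightarrow> real"
  assumes "set_integrable lborel {a..c} f" "a \<le> b" "b \<le> c"
  shows "(LINT x:{a..c}|lborel. f x) = (LINT x:{a..b}|lborel. f x) + (LINT x:{b..c}|lborel. f x)"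
proof -
  have i1: "set_integrable lborel {a..<b} f" by (rule set_integrable_subset[OF assms(1)]) (use assms in auto)
  have i2: "set_integrable lborel {b..c} f" by (rule set_integrable_subset[OF assms(1)]) (use assms in auto)
  have i3: "set_integrable lborel {b} f" by (rule set_integrable_subset[OF assms(1)]) (use assms in auto)
  have "{a..c} = {a..<b} \<union> {b..c}" using assms by auto
  then have "(LINT x:{a..c}|lborel. f x) = (LINT x:{a..<b}|lborel. f x) + (LINT x:{b..c}|lborel. f x)"
  proof -
    have d: "{a..<b} \<inter> {b..c} = {}" by auto
    show ?thesis using set_integral_Un[OF d i1 i2] \<open>{a..c} = {a..<b} \<union> {b..c}\<close> by simp
  qed
  moreover have "{a..b} = {a..<b} \<union> {b}" using assms by auto
  then have "(LINT x:{a..b}|lborel. f x) = (LINT x:{a..<b}|lborel. f x) + (LINT x:{b}|lborel. f x)"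
  proof -
    have d: "{a..<b} \<inter> {b} = {}" by auto
    show ?thesis using set_integral_Un[OF d i1 i3] \<open>{a..b} = {a..<b} \<union> {b}\<close> by simp
  qed
  ultimately show ?thesis by (simp add: set_integral_singleton0)
qed

lemma set_integral_Ico:
  fixes f :: "real \<Rightarrow> real"
  assumes "set_integrable lborel {a..b} f" "a \<le> b"
  shows "(LINT x:{a..<b}|lborel. f x) = (LINT x:{a..b}|lborel. f x)"
proof -
  have i1: "set_integrable lborel {a..<b} f" by (rule set_integrable_subset[OF assms(1)]) (use assms in auto)
  have i3: "set_integrable lborel {b} f" by (rule set_integrable_subset[OF assms(1)]) (use assms in auto)
  have "{a..b} = {a..<b} \<union> {b}" using assms by auto
  then have "(LINT x:{a..b}|lborel. f x) = (LINT x:{a..<b}|lborel. f x) + (LINT x:{b}|lborel. f x)"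
  proof -
    have d: "{a..<b} \<inter> {b} = {}" by auto
    show ?thesis using set_integral_Un[OF d i1 i3] \<open>{a..b} = {a..<b} \<union> {b}\<close> by simp
  qed
  then show ?thesis by (simp add: set_integral_singleton0)
qed




lemma fubini_tri:
  fixes w z :: "real \<Rightarrow> real"
  assumes wi: "set_integrable lborel {0..e} w" and zc: "continuous_on {0..e} z" and e: "0 \<le> e"
  shows "(LINT r:{0..e}|lborel. z r * (LINT s:{0..r}|lborel. w s))
       = (LINT s:{0..e}|lborel. w s * integral {s..e} z)"
proof -
  define W where "W = (\<lambda>s. indicator {0..e} s * w s)"
  define Z where "Z = (\<lambda>r. indicator {0..e} r * z r)"
  have Wi: "integrable lborel W" using wi unfolding W_def set_integrable_def by simp
  have Wm[measurable]: "W \<in> borel_measurable lborel" using Wi by (rule borel_measurable_integrable)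
  have Zm0: "Z \<in> borel_measurable borel" unfolding Z_def
    using borel_measurable_continuous_on_indicator[OF _ zc] by simp
  have Zm[measurable]: "Z \<in> borel_measurable lborel" using Zm0 by simp
  obtain M where M0': "\<forall>r\<in>{0..e}. \<bar>z r\<bar> \<le> M"
    using compact_imp_bounded[OF compact_continuous_image[OF zc compact_Icc]]
    unfolding bounded_iff by auto
  then have M: "\<And>r. r \<in> {0..e} \<Longrightarrow> \<bar>z r\<bar> \<le> M" by blast
  have M0: "0 \<le> M" using M[of 0] e by auto
  have ZM: "\<bar>Z r\<bar> \<le> M * indicator {0..e} r" for r
    using M[of r] by (auto simp: Z_def split: split_indicator)
  define F where "F = (\<lambda>(s::real, r::real). if 0 \<le> s \<and> s \<le> r \<and> r \<le> e then W s * Z r else 0)"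
  have Fm: "F \<in> borel_measurable (lborel \<Otimes>\<^sub>M lborel)"
    unfolding F_def by measurable
  define B where "B = (\<lambda>(s::real, r::real). \<bar>W s\<bar> * (M * indicator {0..e} r))"
  have Bm: "B \<in> borel_measurable (lborel \<Otimes>\<^sub>M lborel)"
    unfolding B_def by measurable
  have ind_int: "integrable lborel (\<lambda>r. M * indicator {0..e} r :: real)"
    by (intro integrable_mult_right) (simp add: integrable_indicator_iff emeasure_lborel_Icc_eq)
  have ind_val: "(\<integral>r. M * indicator {0..e} r \<partial>lborel) = M * e"
    using e by (simp add: integral_indicator)
  have Bi: "integrable (lborel \<Otimes>\<^sub>M lborel) B"
  proof (rule lborel_pair.Fubini_integrable[OF Bm])
    have "(\<lambda>s. \<integral>r. norm (B (s, r)) \<partial>lborel) = (\<lambda>s. \<bar>W s\<bar> * (M * e))"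
    proof
      fix s
      have "(\<lambda>r. norm (B (s, r))) = (\<lambda>r. \<bar>W s\<bar> * (M * indicator {0..e} r))"
        using M0 by (auto simp: B_def fun_eq_iff abs_mult split: split_indicator)
      then show "(\<integral>r. norm (B (s, r)) \<partial>lborel) = \<bar>W s\<bar> * (M * e)"
        using ind_val by simp
    qed
    moreover have "integrable lborel (\<lambda>s. \<bar>W s\<bar> * (M * e))"
      using Wi by (intro integrable_mult_left integrable_abs)
    ultimately show "integrable lborel (\<lambda>s. \<integral>r. norm (B (s, r)) \<partial>lborel)" by simp
    show "AE s in lborel. integrable lborel (\<lambda>r. B (s, r))"
      using ind_int by (auto simp: B_def intro!: integrable_mult_right)
  qed
  have Fi: "integrable (lborel \<Otimes>\<^sub>M lborel) F"
  proof (rule Bochner_Integration.integrable_bound[OF Bi Fm])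
    show "AE p in lborel \<Otimes>\<^sub>M lborel. norm (F p) \<le> norm (B p)"
    proof (rule AE_I2)
      fix p :: "real \<times> real"
      obtain s r where p: "p = (s, r)" by (cases p)
      have "\<bar>W s * Z r\<bar> \<le> \<bar>W s\<bar> * (M * indicator {0..e} r)"
        unfolding abs_mult by (rule mult_left_mono[OF ZM]) simp
      moreover have "0 \<le> \<bar>W s\<bar> * (M * indicator {0..e} r)" using M0 by simp
      ultimately show "norm (F p) \<le> norm (B p)"
        unfolding p F_def B_def by auto
    qed
  qed
  have Fub: "(\<integral>r. (\<integral>s. F (s, r) \<partial>lborel) \<partial>lborel) = (\<integral>s. (\<integral>r. F (s, r) \<partial>lborel) \<partial>lborel)"
    using lborel_pair.Fubini_integral[of "\<lambda>s r. F (s, r)"] Fi by simp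
  have in1: "(\<integral>s. F (s, r) \<partial>lborel) = indicator {0..e} r * (z r * (LINT s:{0..r}|lborel. w s))" for r
  proof -
    have "(\<lambda>s. F (s, r)) = (\<lambda>s. (indicator {0..e} r * z r) * (indicator {0..r} s * w s))"
      by (auto simp: F_def W_def Z_def fun_eq_iff split: split_indicator)
    then show ?thesis unfolding set_lebesgue_integral_def by simp
  qed
  have in2: "(\<integral>r. F (s, r) \<partial>lborel) = indicator {0..e} s * (w s * integral {s..e} z)" for s
  proof -
    have "(\<lambda>r. F (s, r)) = (\<lambda>r. (indicator {0..e} s * w s) * (indicator {s..e} r * z r))"
      by (auto simp: F_def W_def Z_def fun_eq_iff split: split_indicator)
    then have "(\<integral>r. F (s, r) \<partial>lborel) = (indicator {0..e} s * w s) * (LINT r:{s..e}|lborel. z r)"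
      unfolding set_lebesgue_integral_def by simp
    moreover have "s \<in> {0..e} \<Longrightarrow> (LINT r:{s..e}|lborel. z r) = integral {s..e} z"
      by (rule set_borel_integral_eq_integral(2), rule borel_integrable_atLeastAtMost',
          rule continuous_on_subset[OF zc]) auto
    ultimately show ?thesis by (auto split: split_indicator)
  qed
  show ?thesis
    using Fub unfolding in1 in2 set_lebesgue_integral_def by simp
qed



lemma sinh_sq: "sinh x * sinh x = cosh x * cosh x - 1" for x :: real
    using cosh_square_eq[of x] by (simp add: power2_eq_square)

lemma derivG:
  fixes P Q xt :: "real \<Rightarrow> real"
  assumes Pd: "(P has_real_derivative cosh (aa*t) * xt t) (at t within S)"
    and Qd: "(Q has_real_derivative sinh (aa*t) * xt t) (at t within S)" and aa: "aa \<noteq> 0"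
  shows "((\<lambda>t. (c * sinh (aa*t) + aa^2 * (sinh (aa*t) * P t - cosh (aa*t) * Q t)) / aa) has_real_derivative 
    c * cosh (aa*t) + aa^2 * (cosh (aa*t) * P t - sinh (aa*t) * Q t)) (at t within S)"
  apply (rule derivative_eq_intros Pd Qd refl)+
  using aa apply simp
  using aa by (simp add: field_simps power2_eq_square)

lemma derivU0:
  fixes P Q xt :: "real \<Rightarrow> real"
  assumes Pd: "(P has_real_derivative cosh (aa*t) * xt t) (at t within S)"
    and Qd: "(Q has_real_derivative sinh (aa*t) * xt t) (at t within S)" and aa: "aa \<noteq> 0"
  shows "((\<lambda>t. c * cosh (aa*t) + aa^2 * (cosh (aa*t) * P t - sinh (aa*t) * Q t)) has_real_derivative 
    aa^2 * (xt t + (c * sinh (aa*t) + aa^2 * (sinh (aa*t) * P t - cosh (aa*t) * Q t)) / aa)) (at t within S)"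
  apply (rule derivative_eq_intros Pd Qd refl)+
  using aa by (simp add: field_simps power2_eq_square sinh_sq)


lemma pieces_integral:
  fixes f :: "real \<Rightarrow> real"
  assumes i1: "set_integrable lborel {0..<e} f" and i2: "set_integrable lborel {e..<1} f"
    and i3: "set_integrable lborel {1..<1+e} f" and e: "0 \<le> e" "e \<le> 1"
  shows "set_integrable lborel {0..1+e} f"
    and "(LINT x:{0..1+e}|lborel. f x) = (LINT x:{0..<e}|lborel. f x) + (LINT x:{e..<1}|lborel. f x) + (LINT x:{1..<1+e}|lborel. f x)"
proof -
  have i4: "set_integrable lborel {1+e} f" by simp
  have i12: "set_integrable lborel ({0..<e} \<union> {e..<1}) f" by (rule set_integrable_Un[OF i1 i2]) auto
  have i123: "set_integrable lborel (({0..<e} \<union> {e..<1}) \<union> {1..<1+e}) f" by (rule set_integrable_Un[OF i12 i3]) auto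
  have eq: "{0..1+e} = (({0..<e} \<union> {e..<1}) \<union> {1..<1+e}) \<union> {1+e}" using e by auto
  show "set_integrable lborel {0..1+e} f" unfolding eq by (rule set_integrable_Un[OF i123 i4]) auto
  have d1: "{0..<e} \<inter> {e..<1} = {}" by auto
  have d2: "({0..<e} \<union> {e..<1}) \<inter> {1..<1+e} = {}" using e by auto
  have d3: "(({0..<e} \<union> {e..<1}) \<union> {1..<1+e}) \<inter> {1+e} = {}" using e by auto
  show "(LINT x:{0..1+e}|lborel. f x) = (LINT x:{0..<e}|lborel. f x) + (LINT x:{e..<1}|lborel. f x) + (LINT x:{1..<1+e}|lborel. f x)"
    unfolding eq set_integral_Un[OF d3 i123 i4] set_integral_Un[OF d2 i12 i3] set_integral_Un[OF d1 i1 i2]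
    by (simp add: set_integral_singleton0)
qed




theorem mainTheorem5:
  fixes a1 \<epsilon> y :: real and x0 :: "real \<Rightarrow> real"
  assumes "a1 \<noteq> 0" and "0 < \<epsilon>" and "\<epsilon> < 1" and "L2_on {-1..<0} x0"
  defines "T \<equiv> 1 + \<epsilon>"
    and "xt \<equiv> \<lambda>t. y + a1 * (LINT \<tau>:{0..t}|lborel. x0 (\<tau> - 1))"
  defines "c \<equiv> - a1 / sinh (a1 * \<epsilon>) *
              (xt \<epsilon> + a1 * (LINT \<tau>:{0..\<epsilon>}|lborel. sinh (a1 * (\<epsilon> - \<tau>)) * xt \<tau>))"
  defines "u0 \<equiv> \<lambda>t. c * cosh (a1 * t) + a1^2 * (LINT \<tau>:{0..t}|lborel. cosh (a1 * (t - \<tau>)) * xt \<tau>)"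
  defines "uh \<equiv> \<lambda>t. if 0 \<le> t \<and> t < \<epsilon> then u0 t
                  else if \<epsilon> \<le> t \<and> t < 1 then - a1 * x0 (t - 1)
                  else if 1 \<le> t \<and> t < 1 + \<epsilon> then - a1 * (xt (t - 1) + (LINT \<tau>:{0..t - 1}|lborel. u0 \<tau>))
                  else 0"
  shows "admissible a1 T y x0 uh \<and>
         (\<forall>u. admissible a1 T y x0 u \<longrightarrow> L2_norm_on {0..T} uh \<le> L2_norm_on {0..T} u) \<and>
         (\<forall>u. admissible a1 T y x0 u \<and> L2_norm_on {0..T} u \<le> L2_norm_on {0..T} uh
              \<longrightarrow> (AE t in lborel. t \<in> {0..T} \<longrightarrow> u t = uh t))"
proof -
  have a1: "a1 \<noteq> 0" and ep: "0 < \<epsilon>" "\<epsilon> < 1" using assms by auto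
  have T1: "T - 1 = \<epsilon>" by (simp add: T_def)
  define X0 where "X0 = (\<lambda>s. x0 (s - 1))"
  have x0m: "set_borel_measurable lborel {-1..<0} x0" and x0sq: "set_integrable lborel {-1..<0} (\<lambda>t. (x0 t)^2)"
    using assms(4) unfolding L2_on_def by auto
  have x0i: "set_integrable lborel {-1..<0} x0"
    by (rule L2_L1[OF x0m x0sq]) auto
  have X0i0: "set_integrable lborel {0..<1} X0"
    unfolding X0_def using shift_set(2)[of "{0..<1}" 1 "{-1..<0}" x0] x0i by auto
  have X0i: "set_integrable lborel {0..1} X0"
  proof -
    have "{0..1::real} = {0..<1} \<union> {1}" by auto
    then show ?thesis using set_integrable_Un[OF X0i0 set_borel_integrable_singleton[of 1 X0]] by simp
  qed
  have X0sq: "set_integrable lborel {0..<1} (\<lambda>s. (X0 s)^2)"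
    unfolding X0_def using shift_set(2)[of "{0..<1}" 1 "{-1..<0}" "\<lambda>t. (x0 t)^2"] x0sq by auto
  have X0hk: "X0 integrable_on {0..1}" using set_borel_integral_eq_integral(1)[OF X0i] .
  have xt_eq: "xt t = y + a1 * integral {0..t} X0" if "t \<in> {0..1}" for t
  proof -
    have "set_integrable lborel {0..t} X0" by (rule set_integrable_subset[OF X0i]) (use that in auto)
    then show ?thesis unfolding xt_def X0_def[symmetric] using set_borel_integral_eq_integral(2) by metis
  qed
  have xtc: "continuous_on {0..1} xt"
  proof -
    have "continuous_on {0..1} (\<lambda>t. y + a1 * integral {0..t} X0)"
      by (intro continuous_intros indefinite_integral_continuous_1 X0hk)
    then show ?thesis by (rule continuous_on_eq) (simp add: xt_eq)
  qed
  define P where "P = (\<lambda>t. integral {0..t} (\<lambda>\<tau>. cosh (a1*\<tau>) * xt \<tau>))"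
  define Q where "Q = (\<lambda>t. integral {0..t} (\<lambda>\<tau>. sinh (a1*\<tau>) * xt \<tau>))"
  have pcc: "continuous_on {0..1} (\<lambda>\<tau>. cosh (a1*\<tau>) * xt \<tau>)"
    by (intro continuous_intros xtc)
  have qcc: "continuous_on {0..1} (\<lambda>\<tau>. sinh (a1*\<tau>) * xt \<tau>)"
    by (intro continuous_intros xtc)
  have Pd: "(P has_real_derivative cosh (a1*t) * xt t) (at t within {0..1})" if "t \<in> {0..1}" for t
    unfolding P_def by (rule integral_has_real_derivative[OF pcc that])
  have Qd: "(Q has_real_derivative sinh (a1*t) * xt t) (at t within {0..1})" if "t \<in> {0..1}" for t
    unfolding Q_def by (rule integral_has_real_derivative[OF qcc that])
  have Pc: "continuous_on {0..1} P" unfolding P_def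
    by (rule indefinite_integral_continuous_1, rule integrable_continuous_interval[OF pcc])
  have Qc: "continuous_on {0..1} Q" unfolding Q_def
    by (rule indefinite_integral_continuous_1, rule integrable_continuous_interval[OF qcc])
  define U0 where "U0 = (\<lambda>t. c * cosh (a1*t) + a1^2 * (cosh (a1*t) * P t - sinh (a1*t) * Q t))"
  define G where "G = (\<lambda>t. (c * sinh (a1*t) + a1^2 * (sinh (a1*t) * P t - cosh (a1*t) * Q t)) / a1)"
  define z where "z = (\<lambda>t. xt t + G t)"
  have U0c: "continuous_on {0..1} U0" unfolding U0_def by (intro continuous_intros Pc Qc)
  have Gc: "continuous_on {0..1} G" unfolding G_def by (intro continuous_intros Pc Qc) (simp add: a1)
  have zc: "continuous_on {0..1} z" unfolding z_def by (intro continuous_intros Gc xtc)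
  have Gd: "(G has_real_derivative U0 t) (at t within {0..1})" if "t \<in> {0..1}" for t
    unfolding G_def U0_def by (rule derivG[where P=P and Q=Q and xt=xt and aa=a1 and t=t and S="{0..1}" and c=c, OF Pd[OF that] Qd[OF that] a1])
  have U0d: "(U0 has_real_derivative a1^2 * z t) (at t within {0..1})" if "t \<in> {0..1}" for t
    unfolding U0_def z_def G_def by (rule derivU0[where P=P and Q=Q and xt=xt and aa=a1 and t=t and S="{0..1}" and c=c, OF Pd[OF that] Qd[OF that] a1])
  have G0: "G 0 = 0" by (simp add: G_def P_def Q_def)
  have intU0: "integral {0..t} U0 = G t" if "t \<in> {0..1}" for t
  proof -
    have "(U0 has_integral (G t - G 0)) {0..t}"
    proof (rule fundamental_theorem_of_calculus)
      show "0 \<le> t" using that by simp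
      fix x assume x: "x \<in> {0..t}"
      then have "x \<in> {0..1}" using that by auto
      from Gd[OF this] show "(G has_vector_derivative U0 x) (at x within {0..t})"
        unfolding has_real_derivative_iff_has_vector_derivative
        by (rule has_vector_derivative_within_subset) (use that in auto)
    qed
    then show ?thesis using G0 by (simp add: integral_unique)
  qed
  have intz: "integral {s..\<epsilon>} z = (U0 \<epsilon> - U0 s) / a1^2" if "s \<in> {0..\<epsilon>}" for s
  proof -
    have "(z has_integral (U0 \<epsilon> / a1^2 - U0 s / a1^2)) {s..\<epsilon>}"
    proof (rule fundamental_theorem_of_calculus)
      show "s \<le> \<epsilon>" using that by simp
      fix x assume x: "x \<in> {s..\<epsilon>}"
      then have "x \<in> {0..1}" using that ep by auto
      from DERIV_cdivide[OF U0d[OF this], of "a1^2"] a1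
      have "((\<lambda>t. U0 t / a1^2) has_real_derivative z x) (at x within {0..1})" by simp
      then show "((\<lambda>t. U0 t / a1^2) has_vector_derivative z x) (at x within {s..\<epsilon>})"
        unfolding has_real_derivative_iff_has_vector_derivative
        by (rule has_vector_derivative_within_subset) (use that ep in auto)
    qed
    then show ?thesis by (simp add: integral_unique diff_divide_distrib)
  qed
  have cint: "(LINT \<tau>:{0..t}|lborel. cosh (a1 * (t - \<tau>)) * xt \<tau>) = cosh (a1*t) * P t - sinh (a1*t) * Q t"
    if "t \<in> {0..1}" for t
  proof -
    have sub: "{0..t} \<subseteq> {0..1}" using that by auto
    have "continuous_on {0..t} (\<lambda>\<tau>. cosh (a1 * (t - \<tau>)) * xt \<tau>)"
      by (intro continuous_intros continuous_on_subset[OF xtc sub])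
    then have "(LINT \<tau>:{0..t}|lborel. cosh (a1 * (t - \<tau>)) * xt \<tau>) = integral {0..t} (\<lambda>\<tau>. cosh (a1 * (t - \<tau>)) * xt \<tau>)"
      by (intro set_borel_integral_eq_integral(2) borel_integrable_atLeastAtMost')
    also have "\<dots> = integral {0..t} (\<lambda>\<tau>. cosh (a1*t) * (cosh (a1*\<tau>) * xt \<tau>) - sinh (a1*t) * (sinh (a1*\<tau>) * xt \<tau>))"
      by (rule integral_cong) (simp add: right_diff_distrib cosh_diff algebra_simps)
    also have "\<dots> = cosh (a1*t) * P t - sinh (a1*t) * Q t"
    proof -
      have i1: "(\<lambda>\<tau>. cosh (a1*\<tau>) * xt \<tau>) integrable_on {0..t}"
        by (rule integrable_continuous_interval, rule continuous_on_subset[OF pcc sub])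
      have i2: "(\<lambda>\<tau>. sinh (a1*\<tau>) * xt \<tau>) integrable_on {0..t}"
        by (rule integrable_continuous_interval, rule continuous_on_subset[OF qcc sub])
      show ?thesis unfolding P_def Q_def
        by (subst integral_diff) (auto intro: integrable_on_mult_right i1 i2)
    qed
    finally show ?thesis .
  qed
  have sint: "(LINT \<tau>:{0..\<epsilon>}|lborel. sinh (a1 * (\<epsilon> - \<tau>)) * xt \<tau>) = sinh (a1*\<epsilon>) * P \<epsilon> - cosh (a1*\<epsilon>) * Q \<epsilon>"
  proof -
    have sub: "{0..\<epsilon>} \<subseteq> {0..1}" using ep by auto
    have "continuous_on {0..\<epsilon>} (\<lambda>\<tau>. sinh (a1 * (\<epsilon> - \<tau>)) * xt \<tau>)"
      by (intro continuous_intros continuous_on_subset[OF xtc sub])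
    then have "(LINT \<tau>:{0..\<epsilon>}|lborel. sinh (a1 * (\<epsilon> - \<tau>)) * xt \<tau>) = integral {0..\<epsilon>} (\<lambda>\<tau>. sinh (a1 * (\<epsilon> - \<tau>)) * xt \<tau>)"
      by (intro set_borel_integral_eq_integral(2) borel_integrable_atLeastAtMost')
    also have "\<dots> = integral {0..\<epsilon>} (\<lambda>\<tau>. sinh (a1*\<epsilon>) * (cosh (a1*\<tau>) * xt \<tau>) - cosh (a1*\<epsilon>) * (sinh (a1*\<tau>) * xt \<tau>))"
      by (rule integral_cong) (simp add: right_diff_distrib sinh_diff algebra_simps)
    also have "\<dots> = sinh (a1*\<epsilon>) * P \<epsilon> - cosh (a1*\<epsilon>) * Q \<epsilon>"
    proof -
      have i1: "(\<lambda>\<tau>. cosh (a1*\<tau>) * xt \<tau>) integrable_on {0..\<epsilon>}"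
        by (rule integrable_continuous_interval, rule continuous_on_subset[OF pcc sub])
      have i2: "(\<lambda>\<tau>. sinh (a1*\<tau>) * xt \<tau>) integrable_on {0..\<epsilon>}"
        by (rule integrable_continuous_interval, rule continuous_on_subset[OF qcc sub])
      show ?thesis unfolding P_def Q_def
        by (subst integral_diff) (auto intro: integrable_on_mult_right i1 i2)
    qed
    finally show ?thesis .
  qed
  have u0U0: "u0 t = U0 t" if "t \<in> {0..1}" for t
    unfolding u0_def U0_def using cint[OF that] by simp
  have intu0: "(LINT \<tau>:{0..t}|lborel. u0 \<tau>) = G t" if "t \<in> {0..1}" for t
  proof -
    have sub: "{0..t} \<subseteq> {0..1}" using that by auto
    have "(LINT \<tau>:{0..t}|lborel. u0 \<tau>) = (LINT \<tau>:{0..t}|lborel. U0 \<tau>)"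
      by (rule set_integral_eq_on) (use u0U0 sub in auto)
    also have "\<dots> = integral {0..t} U0"
      by (intro set_borel_integral_eq_integral(2) borel_integrable_atLeastAtMost' continuous_on_subset[OF U0c sub])
    finally show ?thesis using intU0[OF that] by simp
  qed
  have sne: "sinh (a1*\<epsilon>) \<noteq> 0" using a1 ep by simp
  have c_eq: "c = - a1 / sinh (a1 * \<epsilon>) * (xt \<epsilon> + a1 * (sinh (a1*\<epsilon>) * P \<epsilon> - cosh (a1*\<epsilon>) * Q \<epsilon>))"
    unfolding c_def sint ..
  have zeps: "z \<epsilon> = 0"
    unfolding z_def G_def c_eq using a1 sne by (simp add: field_simps power2_eq_square)
  have uh_eq: "uh t = (if 0 \<le> t \<and> t < \<epsilon> then U0 t else if \<epsilon> \<le> t \<and> t < 1 then - a1 * X0 t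
      else if 1 \<le> t \<and> t < 1 + \<epsilon> then - a1 * z (t - 1) else 0)" for t
  proof (cases "0 \<le> t \<and> t < \<epsilon>")
    case True
    then have "t \<in> {0..1}" using ep by auto
    then show ?thesis using True u0U0[of t] unfolding uh_def by (simp only: if_True simp_thms)
  next
    case F1: False
    show ?thesis
    proof (cases "\<epsilon> \<le> t \<and> t < 1")
      case True then show ?thesis using F1 unfolding uh_def X0_def by (simp only: if_True if_False simp_thms)
    next
      case F2: False
      show ?thesis
      proof (cases "1 \<le> t \<and> t < 1 + \<epsilon>")
        case True
        then have "t - 1 \<in> {0..1}" using ep by auto
        then show ?thesis using True F1 F2 intu0[of "t-1"] unfolding uh_def z_def by (simp only: if_True if_False simp_thms)
      next
        case False then show ?thesis using F1 F2 unfolding uh_def by (simp only: if_False simp_thms)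
      qed
    qed
  qed
  have ep1: "0 \<le> \<epsilon>" "\<epsilon> \<le> 1" using ep by auto
  have T_eq: "T = 1 + \<epsilon>" by (simp add: T_def)
  have U0i: "set_integrable lborel {0..1} U0" by (rule borel_integrable_atLeastAtMost'[OF U0c])
  have U0sqi: "set_integrable lborel {0..1} (\<lambda>t. (U0 t)^2)"
    by (rule borel_integrable_atLeastAtMost') (intro continuous_intros U0c)
  have zi: "set_integrable lborel {0..\<epsilon>} z"
    by (rule borel_integrable_atLeastAtMost', rule continuous_on_subset[OF zc]) (use ep in auto)
  have zsqi: "set_integrable lborel {0..\<epsilon>} (\<lambda>t. (z t)^2)"
    by (rule borel_integrable_atLeastAtMost') (intro continuous_intros continuous_on_subset[OF zc], use ep in auto)
  have sh1: "\<And>s::real. s \<in> {1..1+\<epsilon>} \<longleftrightarrow> s - 1 \<in> {0..\<epsilon>}" by auto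
  have zshi: "set_integrable lborel {1..1+\<epsilon>} (\<lambda>t. z (t - 1))"
    using shift_set(2)[OF sh1, of z] zi by simp
  have zshsqi: "set_integrable lborel {1..1+\<epsilon>} (\<lambda>t. (z (t - 1))^2)"
    using shift_set(2)[OF sh1, of "\<lambda>t. (z t)^2"] zsqi by simp
  have mX0i: "set_integrable lborel {0..<1} (\<lambda>t. - a1 * X0 t)" by (rule set_integrable_mult_right) (rule X0i0)
  have mzshi: "set_integrable lborel {1..1+\<epsilon>} (\<lambda>t. - a1 * z (t - 1))" by (rule set_integrable_mult_right) (rule zshi)
  have mX0sq: "set_integrable lborel {0..<1} (\<lambda>t. a1^2 * (X0 t)^2)" by (rule set_integrable_mult_right) (rule X0sq)
  have mzshsq: "set_integrable lborel {1..1+\<epsilon>} (\<lambda>t. a1^2 * (z (t - 1))^2)" by (rule set_integrable_mult_right) (rule zshsqi)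
  have uhi: "set_integrable lborel {0..T} uh"
    unfolding T_eq
  proof (rule pieces_integral(1)[OF _ _ _ ep1])
    show "set_integrable lborel {0..<\<epsilon>} uh"
      by (rule set_integrable_eq_on[OF set_integrable_subset[OF U0i]]) (use ep in \<open>auto simp: uh_eq\<close>)
    show "set_integrable lborel {\<epsilon>..<1} uh"
      by (rule set_integrable_eq_on[where g="\<lambda>t. - a1 * X0 t", OF set_integrable_subset[OF mX0i]])
         (use ep in \<open>auto simp: uh_eq\<close>)
    show "set_integrable lborel {1..<1+\<epsilon>} uh"
      by (rule set_integrable_eq_on[where g="\<lambda>t. - a1 * z (t - 1)", OF set_integrable_subset[OF mzshi]])
         (use ep in \<open>auto simp: uh_eq\<close>)
  qed
  have uhsqi: "set_integrable lborel {0..T} (\<lambda>t. (uh t)^2)"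
    unfolding T_eq
  proof (rule pieces_integral(1)[OF _ _ _ ep1])
    show "set_integrable lborel {0..<\<epsilon>} (\<lambda>t. (uh t)^2)"
      by (rule set_integrable_eq_on[OF set_integrable_subset[OF U0sqi]]) (use ep in \<open>auto simp: uh_eq\<close>)
    show "set_integrable lborel {\<epsilon>..<1} (\<lambda>t. (uh t)^2)"
      by (rule set_integrable_eq_on[where g="\<lambda>t. a1^2 * (X0 t)^2", OF set_integrable_subset[OF mX0sq]])
         (use ep in \<open>auto simp: uh_eq power_mult_distrib\<close>)
    show "set_integrable lborel {1..<1+\<epsilon>} (\<lambda>t. (uh t)^2)"
      by (rule set_integrable_eq_on[where g="\<lambda>t. a1^2 * (z (t - 1))^2", OF set_integrable_subset[OF mzshsq]])
         (use ep in \<open>auto simp: uh_eq power_mult_distrib\<close>)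
  qed
  have uhm: "set_borel_measurable lborel {0..T} uh"
    using uhi unfolding set_integrable_def set_borel_measurable_def by (rule borel_measurable_integrable)
  have uhL2: "L2_on {0..T} uh" unfolding L2_on_def using uhm uhsqi by simp
  define xh where "xh = (\<lambda>t. if t \<le> \<epsilon> then z t else 0)"
  have xh0: "xh t = 0" if "\<epsilon> \<le> t" for t using that zeps by (auto simp: xh_def)
  have xhc: "continuous_on {0..T} xh"
    unfolding xh_def
  proof (rule continuous_on_cases_le[where h="\<lambda>x. x"])
    show "continuous_on {x \<in> {0..T}. x \<le> \<epsilon>} z"
      by (rule continuous_on_subset[OF zc]) (use ep in auto)
  qed (use zeps in auto)
  define K where "K = (\<lambda>s. a1 * X0 s + U0 s)"
  have Ki: "set_integrable lborel {0..1} K"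
    unfolding K_def by (intro set_integral_add(1) U0i) (rule set_integrable_mult_right, rule X0i)
  have intK: "(LINT s:{0..t}|lborel. K s) = z t - y" if "t \<in> {0..1}" for t
  proof -
    have sub: "{0..t} \<subseteq> {0..1}" using that by auto
    have a: "set_integrable lborel {0..t} X0" by (rule set_integrable_subset[OF X0i]) (use sub in auto)
    have b: "set_integrable lborel {0..t} U0" by (rule set_integrable_subset[OF U0i]) (use sub in auto)
    have "(LINT s:{0..t}|lborel. K s) = a1 * (LINT s:{0..t}|lborel. X0 s) + (LINT s:{0..t}|lborel. U0 s)"
      unfolding K_def by (subst set_integral_add(2)) (use a b in auto)
    also have "\<dots> = a1 * integral {0..t} X0 + integral {0..t} U0"
      using set_borel_integral_eq_integral(2)[OF a] set_borel_integral_eq_integral(2)[OF b] by simp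
    also have "\<dots> = z t - y" using xt_eq[OF that] intU0[OF that] by (simp add: z_def)
    finally show ?thesis .
  qed
  define H where "H = (\<lambda>s. if s < \<epsilon> then K s else 0)"
  have Hi: "set_integrable lborel {0..T} H"
    unfolding T_eq
  proof (rule pieces_integral(1)[OF _ _ _ ep1])
    show "set_integrable lborel {0..<\<epsilon>} H"
      by (rule set_integrable_eq_on[OF set_integrable_subset[OF Ki]]) (use ep in \<open>auto simp: H_def\<close>)
    show "set_integrable lborel {\<epsilon>..<1} H"
      by (rule set_integrable_eq_on[where g="\<lambda>_. 0"]) (auto simp: H_def set_integrable_def)
    show "set_integrable lborel {1..<1+\<epsilon>} H"
      by (rule set_integrable_eq_on[where g="\<lambda>_. 0"]) (use ep in \<open>auto simp: H_def set_integrable_def\<close>)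
  qed
  have intH: "(LINT s:{0..t}|lborel. H s) = z (min t \<epsilon>) - y" if "t \<in> {0..T}" for t
  proof (cases "t \<le> \<epsilon>")
    case True
    have Hit: "set_integrable lborel {0..t} H" by (rule set_integrable_subset[OF Hi]) (use that in auto)
    have Kit: "set_integrable lborel {0..t} K" by (rule set_integrable_subset[OF Ki]) (use True ep in auto)
    have "(LINT s:{0..t}|lborel. H s) = (LINT s:{0..<t}|lborel. H s)"
      using set_integral_Ico[OF Hit] that by simp
    also have "\<dots> = (LINT s:{0..<t}|lborel. K s)"
      by (rule set_integral_eq_on) (use True in \<open>auto simp: H_def\<close>)
    also have "\<dots> = (LINT s:{0..t}|lborel. K s)"
      using set_integral_Ico[OF Kit] that by simp
    also have "\<dots> = z t - y" using intK[of t] True that ep by auto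
    finally show ?thesis using True by simp
  next
    case False
    have Hit: "set_integrable lborel {0..t} H" by (rule set_integrable_subset[OF Hi]) (use that in auto)
    have "(LINT s:{0..t}|lborel. H s) = (LINT s:{0..\<epsilon>}|lborel. H s) + (LINT s:{\<epsilon>..t}|lborel. H s)"
      by (rule set_integral_split[OF Hit]) (use False ep in auto)
    also have "(LINT s:{\<epsilon>..t}|lborel. H s) = 0"
      by (subst set_integral_eq_on[where g="\<lambda>_. 0"]) (auto simp: H_def)
    also have "(LINT s:{0..\<epsilon>}|lborel. H s) = z \<epsilon> - y"
    proof -
      have Hie: "set_integrable lborel {0..\<epsilon>} H" by (rule set_integrable_subset[OF Hi]) (use ep in \<open>auto simp: T_eq\<close>)
      have Kie: "set_integrable lborel {0..\<epsilon>} K" by (rule set_integrable_subset[OF Ki]) (use ep in auto)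
      have "(LINT s:{0..\<epsilon>}|lborel. H s) = (LINT s:{0..<\<epsilon>}|lborel. H s)"
        using set_integral_Ico[OF Hie] ep by simp
      also have "\<dots> = (LINT s:{0..<\<epsilon>}|lborel. K s)"
        by (rule set_integral_eq_on) (auto simp: H_def)
      also have "\<dots> = (LINT s:{0..\<epsilon>}|lborel. K s)"
        using set_integral_Ico[OF Kie] ep by simp
      also have "\<dots> = z \<epsilon> - y" using intK[of \<epsilon>] ep by auto
      finally show ?thesis .
    qed
    finally show ?thesis using False by simp
  qed
  define gh where "gh = (\<lambda>s. a1 * (if s < 1 then x0 (s - 1) else xh (s - 1)) + uh s)"
  have ghH: "gh s = H s" if "s \<in> {0..T}" for s
  proof -
    have "s < \<epsilon> \<or> (\<epsilon> \<le> s \<and> s < 1) \<or> (1 \<le> s \<and> s < 1 + \<epsilon>) \<or> s = 1 + \<epsilon>"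
      using that by (auto simp: T_eq)
    then consider "s < \<epsilon>" | "\<epsilon> \<le> s" "s < 1" | "1 \<le> s" "s < 1 + \<epsilon>" | "s = 1 + \<epsilon>"
      by blast
    then show ?thesis
    proof cases
      case 1 then show ?thesis using that ep unfolding gh_def H_def K_def uh_eq X0_def by auto
    next
      case 2 then show ?thesis using that ep unfolding gh_def H_def uh_eq X0_def by auto
    next
      case 3 then show ?thesis using that ep unfolding gh_def H_def uh_eq xh_def by auto
    next
      case 4 then show ?thesis using that ep zeps unfolding gh_def H_def uh_eq xh_def by auto
    qed
  qed
  have dde_h: "dde_sol a1 y x0 uh T xh"
    unfolding dde_sol_def
  proof (intro conjI ballI xhc)
    fix t assume t: "t \<in> {0..T}"
    have "(LINT s:{0..t}|lborel. a1 * (if s < 1 then x0 (s - 1) else xh (s - 1)) + uh s) = (LINT s:{0..t}|lborel. H s)"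
      by (rule set_integral_eq_on) (use ghH t in \<open>auto simp: gh_def\<close>)
    then show "xh t = y + (LINT s:{0..t}|lborel. a1 * (if s < 1 then x0 (s - 1) else xh (s - 1)) + uh s)"
      using intH[OF t] zeps by (auto simp: xh_def min_def)
  qed
  have adm_h: "admissible a1 T y x0 uh"
    unfolding admissible_def using uhL2 dde_h xh0 T1 by auto
  have ghi: "set_integrable lborel {0..T} gh"
    by (rule set_integrable_eq_on[OF Hi]) (use ghH in auto)
  have finT: "emeasure lborel {0..T} < \<infinity>" by (simp add: emeasure_lborel_Icc_eq)
  have key: "set_integrable lborel {0..T} (\<lambda>t. (u t - uh t)^2) \<and>
      (LINT t:{0..T}|lborel. (u t)^2) = (LINT t:{0..T}|lborel. (uh t)^2) + (LINT t:{0..T}|lborel. (u t - uh t)^2)"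
    if adm: "admissible a1 T y x0 u" for u
  proof -
    from adm obtain x where uL2: "L2_on {0..T} u" and xs: "dde_sol a1 y x0 u T x"
      and xz: "\<forall>t\<in>{T - 1..T}. x t = 0" unfolding admissible_def by blast
    have um: "set_borel_measurable lborel {0..T} u" and usq: "set_integrable lborel {0..T} (\<lambda>t. (u t)^2)"
      using uL2 unfolding L2_on_def by auto
    have ui: "set_integrable lborel {0..T} u" by (rule L2_L1[OF um usq finT]) simp
    have xc: "continuous_on {0..T} x" using xs unfolding dde_sol_def by simp
    define gu where "gu = (\<lambda>s. a1 * (if s < 1 then x0 (s - 1) else x (s - 1)) + u s)"
    have xeq: "x t = y + (LINT s:{0..t}|lborel. gu s)" if "t \<in> {0..T}" for t
      using xs that unfolding dde_sol_def gu_def by blast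
    have xhe: "xh t = y + (LINT s:{0..t}|lborel. gh s)" if "t \<in> {0..T}" for t
      using dde_h that unfolding dde_sol_def gh_def by blast
    have gui: "set_integrable lborel {0..T} gu"
    proof -
      have xi: "set_integrable lborel {0..\<epsilon>} x"
        by (rule borel_integrable_atLeastAtMost', rule continuous_on_subset[OF xc]) (use ep in \<open>auto simp: T_eq\<close>)
      have xshi: "set_integrable lborel {1..1+\<epsilon>} (\<lambda>t. x (t - 1))"
        using shift_set(2)[OF sh1, of x] xi by simp
      have A: "set_integrable lborel {0..<1} gu"
      proof (rule set_integrable_eq_on)
        show "set_integrable lborel {0..<1} (\<lambda>s. a1 * X0 s + u s)"
          by (intro set_integral_add(1)) (rule set_integrable_mult_right, rule X0i0, rule set_integrable_subset[OF ui], use ep in \<open>auto simp: T_eq\<close>)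
      qed (auto simp: gu_def X0_def)
      have B: "set_integrable lborel {1..1+\<epsilon>} gu"
      proof (rule set_integrable_eq_on)
        show "set_integrable lborel {1..1+\<epsilon>} (\<lambda>s. a1 * x (s - 1) + u s)"
          by (intro set_integral_add(1)) (rule set_integrable_mult_right, rule xshi, rule set_integrable_subset[OF ui], use ep in \<open>auto simp: T_eq\<close>)
      qed (auto simp: gu_def)
      have "{0..T} = {0..<1} \<union> {1..1+\<epsilon>}" using ep by (auto simp: T_eq)
      then show ?thesis using set_integrable_Un[OF A B] by simp
    qed
    define W where "W = (\<lambda>t. x t - xh t)"
    define w where "w = (\<lambda>s. u s - uh s)"
    define hW where "hW = (\<lambda>s. a1 * (if s < 1 then 0 else W (s - 1)) + w s)"
    have hW_eq: "hW s = gu s - gh s" for s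
      unfolding hW_def gu_def gh_def W_def w_def by (simp add: algebra_simps)
    have hWi: "set_integrable lborel {0..T} hW"
      unfolding hW_eq by (rule set_integral_diff(1)[OF gui ghi])
    have wi: "set_integrable lborel {0..T} w"
      unfolding w_def by (rule set_integral_diff(1)[OF ui uhi])
    have Wint: "W t = (LINT s:{0..t}|lborel. hW s)" if t: "t \<in> {0..T}" for t
    proof -
      have a: "set_integrable lborel {0..t} gu" by (rule set_integrable_subset[OF gui]) (use t in auto)
      have b: "set_integrable lborel {0..t} gh" by (rule set_integrable_subset[OF ghi]) (use t in auto)
      show ?thesis unfolding hW_eq W_def xeq[OF t] xhe[OF t] set_integral_diff(2)[OF a b] by simp
    qed
    have W0: "W t = 0" if "t \<in> {\<epsilon>..T}" for t
      using xz xh0[of t] that T1 unfolding W_def by auto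
    have hW0: "AE s in lborel. s \<in> {\<epsilon>..T} \<longrightarrow> hW s = 0"
    proof (rule ae_zero_of_intervals)
      show "set_integrable lborel {\<epsilon>..T} hW" by (rule set_integrable_subset[OF hWi]) (use ep in auto)
      fix t assume t: "t \<in> {\<epsilon>..T}"
      have a: "set_integrable lborel {0..t} hW" by (rule set_integrable_subset[OF hWi]) (use t in auto)
      have "(LINT s:{0..t}|lborel. hW s) = (LINT s:{0..\<epsilon>}|lborel. hW s) + (LINT s:{\<epsilon>..t}|lborel. hW s)"
        by (rule set_integral_split[OF a]) (use t ep in auto)
      moreover have "(LINT s:{0..t}|lborel. hW s) = 0" using Wint[of t] W0[OF t] t ep by auto
      moreover have "(LINT s:{0..\<epsilon>}|lborel. hW s) = 0" using Wint[of \<epsilon>] W0[of \<epsilon>] ep by (auto simp: T_eq)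
      ultimately show "(LINT s:{\<epsilon>..t}|lborel. hW s) = 0" by simp
    qed
    have Ww: "W t = (LINT s:{0..t}|lborel. w s)" if t: "t \<in> {0..\<epsilon>}" for t
    proof -
      have "W t = (LINT s:{0..t}|lborel. hW s)" using Wint[of t] t ep by (auto simp: T_eq)
      also have "\<dots> = (LINT s:{0..t}|lborel. w s)"
        by (rule set_integral_eq_on) (use t ep in \<open>auto simp: hW_def\<close>)
      finally show ?thesis .
    qed
    have wm: "set_borel_measurable lborel {0..T} w"
      using wi unfolding set_integrable_def set_borel_measurable_def by (rule borel_measurable_integrable)
    have uuhi: "set_integrable lborel {0..T} (\<lambda>t. u t * uh t)" by (rule L2_mult[OF um uhm usq uhsqi])
    have wsq: "set_integrable lborel {0..T} (\<lambda>t. (w t)^2)"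
    proof (rule set_integrable_eq_on)
      show "set_integrable lborel {0..T} (\<lambda>t. (u t)^2 - 2 * (u t * uh t) + (uh t)^2)"
        by (intro set_integral_add(1) set_integral_diff(1) usq uhsqi) (rule set_integrable_mult_right, rule uuhi)
    qed (simp add: w_def power2_eq_square algebra_simps)
    have uhw: "set_integrable lborel {0..T} (\<lambda>t. uh t * w t)"
    proof (rule set_integrable_eq_on)
      show "set_integrable lborel {0..T} (\<lambda>t. u t * uh t - (uh t)^2)"
        by (intro set_integral_diff(1) uuhi uhsqi)
    qed (simp add: w_def power2_eq_square algebra_simps)
    have Wc: "continuous_on {0..\<epsilon>} W"
      unfolding W_def by (intro continuous_intros continuous_on_subset[OF xc] continuous_on_subset[OF xhc]) (use ep in \<open>auto simp: T_eq\<close>)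
    have subeT: "{0..\<epsilon>} \<subseteq> {0..T}" using ep by (auto simp: T_eq)
    have wie: "set_integrable lborel {0..\<epsilon>} w" by (rule set_integrable_subset[OF wi]) (use subeT in auto)
    have U0wi: "set_integrable lborel {0..\<epsilon>} (\<lambda>t. U0 t * w t)"
    proof (rule L2_mult)
      have "set_integrable lborel {0..\<epsilon>} U0" by (rule set_integrable_subset[OF U0i]) (use ep in auto)
      then show "set_borel_measurable lborel {0..\<epsilon>} U0"
        unfolding set_integrable_def set_borel_measurable_def by (rule borel_measurable_integrable)
      show "set_borel_measurable lborel {0..\<epsilon>} w"
        using wie unfolding set_integrable_def set_borel_measurable_def by (rule borel_measurable_integrable)
      show "set_integrable lborel {0..\<epsilon>} (\<lambda>t. (U0 t)^2)" by (rule set_integrable_subset[OF U0sqi]) (use ep in auto)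
      show "set_integrable lborel {0..\<epsilon>} (\<lambda>t. (w t)^2)" by (rule set_integrable_subset[OF wsq]) (use subeT in auto)
    qed
    have Ie: "(LINT s:{0..\<epsilon>}|lborel. w s) = 0" using Ww[of \<epsilon>] W0[of \<epsilon>] ep by (auto simp: T_eq)
    have P1: "(LINT t:{0..<\<epsilon>}|lborel. uh t * w t) = (LINT t:{0..\<epsilon>}|lborel. U0 t * w t)"
    proof -
      have "(LINT t:{0..<\<epsilon>}|lborel. uh t * w t) = (LINT t:{0..<\<epsilon>}|lborel. U0 t * w t)"
        by (rule set_integral_eq_on) (simp add: uh_eq)
      also have "\<dots> = (LINT t:{0..\<epsilon>}|lborel. U0 t * w t)"
        using set_integral_Ico[OF U0wi] ep by simp
      finally show ?thesis .
    qed
    have P2: "(LINT t:{\<epsilon>..<1}|lborel. uh t * w t) = 0"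
      unfolding set_lebesgue_integral_def
    proof (rule integral_eq_zero_AE)
      show "AE t in lborel. indicator {\<epsilon>..<1} t *\<^sub>R (uh t * w t) = 0"
        using hW0
      proof (rule AE_mp, intro AE_I2 impI)
        fix t assume h: "t \<in> {\<epsilon>..T} \<longrightarrow> hW t = 0"
        show "indicator {\<epsilon>..<1} t *\<^sub>R (uh t * w t) = 0"
        proof (cases "t \<in> {\<epsilon>..<1}")
          case True
          then have "hW t = 0" using h ep by (auto simp: T_eq)
          then have "w t = 0" using True by (simp add: hW_def)
          then show ?thesis by simp
        qed simp
      qed
    qed
    define V where "V = (\<lambda>s. a1^2 * (z (s - 1) * W (s - 1)))"
    have zWc: "continuous_on {0..\<epsilon>} (\<lambda>r. a1^2 * (z r * W r))"
      by (intro continuous_intros Wc continuous_on_subset[OF zc]) (use ep in auto)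
    have zWi: "set_integrable lborel {0..\<epsilon>} (\<lambda>r. a1^2 * (z r * W r))"
      by (rule borel_integrable_atLeastAtMost'[OF zWc])
    have Vi: "set_integrable lborel {1..1+\<epsilon>} V"
      using shift_set(2)[OF sh1, of "\<lambda>r. a1^2 * (z r * W r)"] zWi unfolding V_def by simp
    have P3: "(LINT t:{1..<1+\<epsilon>}|lborel. uh t * w t) = a1^2 * (LINT r:{0..\<epsilon>}|lborel. z r * W r)"
    proof -
      have i1: "set_integrable lborel {1..<1+\<epsilon>} (\<lambda>t. uh t * w t)"
        by (rule set_integrable_subset[OF uhw]) (use ep in \<open>auto simp: T_eq\<close>)
      have i2: "set_integrable lborel {1..<1+\<epsilon>} V"
        by (rule set_integrable_subset[OF Vi]) auto
      have "(LINT t:{1..<1+\<epsilon>}|lborel. uh t * w t - V t) = 0"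
        unfolding set_lebesgue_integral_def
      proof (rule integral_eq_zero_AE)
        show "AE t in lborel. indicator {1..<1+\<epsilon>} t *\<^sub>R (uh t * w t - V t) = 0"
          using hW0
        proof (rule AE_mp, intro AE_I2 impI)
          fix t assume h: "t \<in> {\<epsilon>..T} \<longrightarrow> hW t = 0"
          show "indicator {1..<1+\<epsilon>} t *\<^sub>R (uh t * w t - V t) = 0"
          proof (cases "t \<in> {1..<1+\<epsilon>}")
            case True
            then have "hW t = 0" using h ep by (auto simp: T_eq)
            then have "w t = - a1 * W (t - 1)" using True by (simp add: hW_def)
            moreover have "uh t = - a1 * z (t - 1)" using True ep by (simp add: uh_eq)
            ultimately show ?thesis by (simp add: V_def power2_eq_square)
          qed simp
        qed
      qed
      then have "(LINT t:{1..<1+\<epsilon>}|lborel. uh t * w t) = (LINT t:{1..<1+\<epsilon>}|lborel. V t)"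
        using set_integral_diff(2)[OF i1 i2] by simp
      also have "\<dots> = (LINT t:{1..1+\<epsilon>}|lborel. V t)"
        using set_integral_Ico[OF Vi] ep by simp
      also have "\<dots> = (LINT r:{0..\<epsilon>}|lborel. a1^2 * (z r * W r))"
        unfolding V_def by (rule shift_set(1)[OF sh1])
      also have "\<dots> = a1^2 * (LINT r:{0..\<epsilon>}|lborel. z r * W r)" by simp
      finally show ?thesis .
    qed
    have F: "a1^2 * (LINT r:{0..\<epsilon>}|lborel. z r * W r) = - (LINT t:{0..\<epsilon>}|lborel. U0 t * w t)"
    proof -
      have "(LINT r:{0..\<epsilon>}|lborel. z r * W r) = (LINT r:{0..\<epsilon>}|lborel. z r * (LINT s:{0..r}|lborel. w s))"
        by (rule set_integral_eq_on) (simp add: Ww)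
      also have "\<dots> = (LINT s:{0..\<epsilon>}|lborel. w s * integral {s..\<epsilon>} z)"
        by (rule fubini_tri[OF wie continuous_on_subset[OF zc]]) (use ep in auto)
      finally have "a1^2 * (LINT r:{0..\<epsilon>}|lborel. z r * W r) = (LINT s:{0..\<epsilon>}|lborel. a1^2 * (w s * integral {s..\<epsilon>} z))"
        by simp
      also have "\<dots> = (LINT s:{0..\<epsilon>}|lborel. U0 \<epsilon> * w s - U0 s * w s)"
      proof (rule set_integral_eq_on)
        fix s assume s: "s \<in> {0..\<epsilon>}"
        have e: "a1^2 * integral {s..\<epsilon>} z = U0 \<epsilon> - U0 s" using intz[OF s] a1 by simp
        have "a1^2 * (w s * integral {s..\<epsilon>} z) = w s * (a1^2 * integral {s..\<epsilon>} z)" by (simp only: mult.left_commute)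
        also have "\<dots> = w s * (U0 \<epsilon> - U0 s)" by (simp only: e)
        also have "\<dots> = U0 \<epsilon> * w s - U0 s * w s" by (simp add: algebra_simps)
        finally show "a1^2 * (w s * integral {s..\<epsilon>} z) = U0 \<epsilon> * w s - U0 s * w s" .
      qed
      also have "\<dots> = U0 \<epsilon> * (LINT s:{0..\<epsilon>}|lborel. w s) - (LINT s:{0..\<epsilon>}|lborel. U0 s * w s)"
        by (subst set_integral_diff(2)) (use wie U0wi in auto)
      finally show ?thesis using Ie by simp
    qed
    have cross: "(LINT t:{0..T}|lborel. uh t * w t) = 0"
    proof -
      have "(LINT t:{0..T}|lborel. uh t * w t) = (LINT t:{0..<\<epsilon>}|lborel. uh t * w t)
          + (LINT t:{\<epsilon>..<1}|lborel. uh t * w t) + (LINT t:{1..<1+\<epsilon>}|lborel. uh t * w t)"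
        unfolding T_eq
        by (rule pieces_integral(2)[OF _ _ _ ep1]; rule set_integrable_subset[OF uhw]) (use ep in \<open>auto simp: T_eq\<close>)
      then show ?thesis using P1 P2 P3 F by simp
    qed
    have "(LINT t:{0..T}|lborel. (u t)^2) = (LINT t:{0..T}|lborel. (uh t)^2 + 2 * (uh t * w t) + (w t)^2)"
      by (rule set_integral_eq_on) (simp add: w_def power2_eq_square algebra_simps)
    also have "\<dots> = (LINT t:{0..T}|lborel. (uh t)^2) + 2 * (LINT t:{0..T}|lborel. uh t * w t) + (LINT t:{0..T}|lborel. (w t)^2)"
      using uhsqi uhw wsq by (subst set_integral_add(2), auto)+
    finally show ?thesis using cross wsq by (simp add: w_def)
  qed
  show ?thesis
  proof (intro conjI allI impI)
    show "admissible a1 T y x0 uh" by (rule adm_h)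
  next
    fix u assume adm: "admissible a1 T y x0 u"
    from key[OF adm] have eq: "(LINT t:{0..T}|lborel. (u t)^2) = (LINT t:{0..T}|lborel. (uh t)^2) + (LINT t:{0..T}|lborel. (u t - uh t)^2)"
      by blast
    have "0 \<le> (LINT t:{0..T}|lborel. (u t - uh t)^2)"
      unfolding set_lebesgue_integral_def by (rule integral_nonneg_AE) (auto split: split_indicator)
    then show "L2_norm_on {0..T} uh \<le> L2_norm_on {0..T} u"
      unfolding L2_norm_on_def using eq by simp
  next
    fix u assume a: "admissible a1 T y x0 u \<and> L2_norm_on {0..T} u \<le> L2_norm_on {0..T} uh"
    from key[of u] a have ws: "set_integrable lborel {0..T} (\<lambda>t. (u t - uh t)^2)"
      and eq: "(LINT t:{0..T}|lborel. (u t)^2) = (LINT t:{0..T}|lborel. (uh t)^2) + (LINT t:{0..T}|lborel. (u t - uh t)^2)"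
      by blast+
    have nn: "0 \<le> (LINT t:{0..T}|lborel. (u t - uh t)^2)"
      unfolding set_lebesgue_integral_def by (rule integral_nonneg_AE) (auto split: split_indicator)
    have "(LINT t:{0..T}|lborel. (u t)^2) \<le> (LINT t:{0..T}|lborel. (uh t)^2)"
      using a unfolding L2_norm_on_def by simp
    then have "(LINT t:{0..T}|lborel. (u t - uh t)^2) = 0" using eq nn by linarith
    then have z0: "integral\<^sup>L lborel (\<lambda>t. indicator {0..T} t *\<^sub>R (u t - uh t)^2) = 0"
      unfolding set_lebesgue_integral_def .
    have "AE t in lborel. indicator {0..T} t *\<^sub>R (u t - uh t)^2 = 0"
      using integral_nonneg_eq_0_iff_AE[of lborel "\<lambda>t. indicator {0..T} t *\<^sub>R (u t - uh t)^2"] ws z0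
      unfolding set_integrable_def by (auto split: split_indicator)
    then show "AE t in lborel. t \<in> {0..T} \<longrightarrow> u t = uh t"
      by (rule AE_mp) (intro AE_I2, auto split: split_indicator)
  qed
qed


end
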